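(* Let $A\in\mathbb{R}^{d\times n}$ have first column identically zero, i.e. $A_{i,1}=0$ for all $i\in[d]$. For each integer $j\ge0$ and $k\in\{0,1,\dots,\log n\}$, let $b_{j,k}\in\mathbb{R}^d$ be column $1+2^k j$ of $A$, with $b_{j,k}$ the zero vector if $1+2^kj>n$. Then: (1) for each $i\in[d]$, $\max_{j\in[n]}A_{i,j}^2\le(\log n)\sum_{k=0}^{\log n}\sum_{j=2}^{n+1}\big((b_{j,k})_i-(b_{j-1,k})_i\big)^2$; (2) $\sum_{i=1}^d\max_{j\in[n]}A_{i,j}^2\le(\log n)\sum_{k=0}^{\log n}\sum_{j=2}^{n+1}\|b_{j,k}-b_{j-1,k}\|_2^2$.
   Context: Here $\log$ denotes the base-2 logarithm and $n$ is a power of $2$, so that $\log n$ is an integer. *)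

theory Defs
  imports Complex_Main
begin

text \<open>A d x n real matrix is represented as a function A :: nat => nat => real,
  entry (i,j) being A i j, with 1-based indices i in {1..d}, j in {1..n}.
  bcol A n j k i is the i-th entry of the vector b_{j,k}: column 1 + 2^k j of A,
  or the zero vector if 1 + 2^k j > n.\<close>

definition bcol :: "(nat \<Rightarrow> nat \<Rightarrow> real) \<Rightarrow> nat \<Rightarrow> nat \<Rightarrow> nat \<Rightarrow> nat \<Rightarrow> real" where
  "bcol A n j k i = (if 1 + 2 ^ k * j \<le> n then A i (1 + 2 ^ k * j) else 0)"

end

theory Submission
  imports Defs
begin

lemma cs_step:
  fixes u D X p :: real
  assumes "u\<^sup>2 \<le> p * X" "X \<ge> 0" "p \<ge> 0"
  shows "(u - D)\<^sup>2 \<le> (p + 1) * (X + D\<^sup>2)"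
proof (cases "p = 0")
  case True
  then have "u\<^sup>2 \<le> 0" using assms by simp
  then have "u = 0" by (metis order_antisym zero_le_power2 zero_eq_power2)
  then show ?thesis using True assms by simp
next
  case False
  then have pp: "p > 0" using assms by simp
  have "0 \<le> (u + p * D)\<^sup>2" by simp
  then have "p * (u - D)\<^sup>2 \<le> (p + 1) * (u\<^sup>2 + p * D\<^sup>2)"
    by (simp add: power2_eq_square algebra_simps)
  also have "\<dots> \<le> (p + 1) * (p * X + p * D\<^sup>2)"
    using assms by (intro mult_left_mono) auto
  also have "\<dots> = p * ((p + 1) * (X + D\<^sup>2))" by (simp add: algebra_simps)
  finally show ?thesis using pp by simp
qed

lemma key:
  fixes A :: "nat \<Rightarrow> nat \<Rightarrow> real" and n m i :: nat
  assumes pow: "n = 2 ^ m"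
  defines "T \<equiv> \<lambda>k. (\<Sum>k' = k..m. \<Sum>j = 2..n+1. (bcol A n j k' i - bcol A n (j - 1) k' i)\<^sup>2)"
  shows "k \<le> m \<Longrightarrow> a \<ge> 1 \<Longrightarrow> a * 2 ^ k \<le> 2 ^ m \<Longrightarrow>
           (bcol A n a k i)\<^sup>2 \<le> real (m - k) * T k"
proof (induction "m - k" arbitrary: k a)
  case 0
  then have km: "k = m" by simp
  with 0 have "a = 1" by simp
  then show ?case using km pow by (simp add: bcol_def)
next
  case (Suc p)
  then have km: "k < m" and p: "m - (k+1) = p" by auto
  have T: "T k = (\<Sum>j = 2..n+1. (bcol A n j k i - bcol A n (j - 1) k i)\<^sup>2) + T (k+1)"
    unfolding T_def using km by (simp add: sum.atLeast_Suc_atMost)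
  have Tnn: "T (k+1) \<ge> 0" unfolding T_def by (intro sum_nonneg) auto
  have Snn: "(\<Sum>j = 2..n+1. (bcol A n j k i - bcol A n (j - 1) k i)\<^sup>2) \<ge> 0"
    by (intro sum_nonneg) auto
  show ?case
  proof (cases "even a")
    case True
    then obtain b where b: "a = 2 * b" by blast
    have b1: "b \<ge> 1" using Suc.prems b by simp
    have "b * 2 ^ (k+1) \<le> 2 ^ m" using Suc.prems b by (simp add: algebra_simps)
    then have IH: "(bcol A n b (k+1) i)\<^sup>2 \<le> real (m - (k+1)) * T (k+1)"
      using Suc.hyps(1)[OF p[symmetric] _ b1] km by simp
    have eq: "bcol A n a k i = bcol A n b (k+1) i"
      unfolding bcol_def b by (simp add: algebra_simps)
    have "real (m - (k+1)) * T (k+1) \<le> real (m - k) * T k"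
      using T Tnn Snn km by (intro mult_mono) auto
    then show ?thesis using IH eq by simp
  next
    case False
    then have "even (a + 1)" by simp
    then obtain b where b: "a + 1 = 2 * b" unfolding dvd_def by blast
    have b1: "b \<ge> 1" using b by simp
    have ne: "a * 2 ^ k \<noteq> 2 ^ m"
    proof
      assume h: "a * 2 ^ k = 2 ^ m"
      have "(2::nat) ^ m = 2 ^ k * 2 ^ (m - k)" using km by (simp flip: power_add)
      then have "a = 2 ^ (m - k)" using h by simp
      then show False using False km by simp
    qed
    have lt: "a * 2 ^ k < 2 ^ m" using ne Suc.prems by simp
    have "(a + 1) * 2 ^ k \<le> 2 ^ m"
    proof -
      have "(2::nat) ^ m = 2 ^ k * 2 ^ (m - k)" using km by (simp flip: power_add)
      then have "a * 2 ^ k < 2 ^ (m-k) * 2 ^ k" using lt by simp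
      then have "a < 2 ^ (m - k)" by simp
      then have "(a + 1) * 2 ^ k \<le> 2 ^ (m-k) * 2 ^ k" by (intro mult_right_mono) auto
      then show ?thesis using \<open>(2::nat) ^ m = 2 ^ k * 2 ^ (m - k)\<close> by (simp add: mult.commute)
    qed
    moreover have "b * 2 ^ (k+1) = (a + 1) * 2 ^ k" using b by simp
    ultimately have "b * 2 ^ (k+1) \<le> 2 ^ m" by simp
    then have IH: "(bcol A n b (k+1) i)\<^sup>2 \<le> real (m - (k+1)) * T (k+1)"
      using Suc.hyps(1)[OF p[symmetric] _ b1] km by simp
    have eq: "bcol A n (a+1) k i = bcol A n b (k+1) i"
      unfolding bcol_def using b by (simp add: algebra_simps)
    define D where "D = bcol A n (a+1) k i - bcol A n a k i"
    have jr: "a + 1 \<in> {2..n+1}"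
    proof -
      have "(1::nat) \<le> 2 ^ k" by simp
      then have "(a + 1) * 1 \<le> (a+1) * 2 ^ k" by (rule mult_left_mono) simp
      then have "a + 1 \<le> (a+1) * 2 ^ k" by simp
      then show ?thesis using \<open>(a + 1) * 2 ^ k \<le> 2 ^ m\<close> pow Suc.prems by auto
    qed
    have "D\<^sup>2 \<le> (\<Sum>j = 2..n+1. (bcol A n j k i - bcol A n (j - 1) k i)\<^sup>2)"
      unfolding D_def using member_le_sum[OF jr, of "\<lambda>j. (bcol A n j k i - bcol A n (j - 1) k i)\<^sup>2"]
      by simp
    then have TD: "T (k+1) + D\<^sup>2 \<le> T k" using T by simp
    have "(bcol A n a k i)\<^sup>2 = (bcol A n b (k+1) i - D)\<^sup>2" unfolding D_def eq[symmetric] by simp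
    also have "\<dots> \<le> (real p + 1) * (T (k+1) + D\<^sup>2)"
      using cs_step[OF _ Tnn, of "bcol A n b (k+1) i" "real p" D] IH unfolding p by simp
    also have "\<dots> \<le> (real p + 1) * T k" using TD by (intro mult_left_mono) auto
    finally have fin: "(bcol A n a k i)\<^sup>2 \<le> (real p + 1) * T k" .
    have "real (m - k) = real p + 1" using Suc.hyps(2)[symmetric] by simp
    then show ?thesis using fin by simp
  qed
qed

lemma part1:
  fixes A :: "nat \<Rightarrow> nat \<Rightarrow> real" and n m i :: nat
  assumes pow: "n = 2 ^ m" and z: "A i 1 = 0"
  shows "Max ((\<lambda>j. (A i j)\<^sup>2) ` {1..n})
              \<le> real m * (\<Sum>k = 0..m. \<Sum>j = 2..n+1. (bcol A n j k i - bcol A n (j - 1) k i)\<^sup>2)"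
proof -
  have n1: "n \<ge> 1" using pow by simp
  have Snn: "0 \<le> (\<Sum>k = 0..m. \<Sum>j = 2..n+1. (bcol A n j k i - bcol A n (j - 1) k i)\<^sup>2)"
    by (intro sum_nonneg) auto
  show ?thesis
  proof (subst Max_le_iff, simp, use n1 in simp, intro ballI)
    fix y assume "y \<in> (\<lambda>j. (A i j)\<^sup>2) ` {1..n}"
    then obtain j where j: "j \<in> {1..n}" "y = (A i j)\<^sup>2" by blast
    show "y \<le> real m * (\<Sum>k = 0..m. \<Sum>j = 2..n+1. (bcol A n j k i - bcol A n (j - 1) k i)\<^sup>2)"
    proof (cases "j = 1")
      case True
      then show ?thesis using j z Snn by simp
    next
      case False
      then have "j - 1 \<ge> 1" "(j - 1) * 2 ^ 0 \<le> 2 ^ m" using j pow by auto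
      from key[OF pow, of 0 "j - 1" A i, OF _ this]
      have "(bcol A n (j - 1) 0 i)\<^sup>2 \<le> real m * (\<Sum>k = 0..m. \<Sum>j = 2..n+1. (bcol A n j k i - bcol A n (j - 1) k i)\<^sup>2)"
        by simp
      moreover have "bcol A n (j - 1) 0 i = A i j" unfolding bcol_def using j False by auto
      ultimately show ?thesis using j by simp
    qed
  qed
qed

theorem lemmaC4:
  fixes A :: "nat \<Rightarrow> nat \<Rightarrow> real" and d n m :: nat
  assumes pow: "n = 2 ^ m"
    and first_zero: "\<forall>i\<in>{1..d}. A i 1 = 0"
  shows "(\<forall>i\<in>{1..d}.
            Max ((\<lambda>j. (A i j)\<^sup>2) ` {1..n})
              \<le> real m * (\<Sum>k = 0..m. \<Sum>j = 2..n+1. (bcol A n j k i - bcol A n (j - 1) k i)\<^sup>2))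
       \<and> (\<Sum>i = 1..d. Max ((\<lambda>j. (A i j)\<^sup>2) ` {1..n}))
              \<le> real m * (\<Sum>k = 0..m. \<Sum>j = 2..n+1.
                    (\<Sum>i = 1..d. (bcol A n j k i - bcol A n (j - 1) k i)\<^sup>2))"
proof
  show P1: "\<forall>i\<in>{1..d}.
            Max ((\<lambda>j. (A i j)\<^sup>2) ` {1..n})
              \<le> real m * (\<Sum>k = 0..m. \<Sum>j = 2..n+1. (bcol A n j k i - bcol A n (j - 1) k i)\<^sup>2)"
    using part1[OF pow] first_zero by blast
  have "(\<Sum>i = 1..d. Max ((\<lambda>j. (A i j)\<^sup>2) ` {1..n}))
     \<le> (\<Sum>i = 1..d. real m * (\<Sum>k = 0..m. \<Sum>j = 2..n+1. (bcol A n j k i - bcol A n (j - 1) k i)\<^sup>2))"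
    using P1 by (intro sum_mono) auto
  also have "\<dots> = real m * (\<Sum>k = 0..m. \<Sum>j = 2..n+1.
                    (\<Sum>i = 1..d. (bcol A n j k i - bcol A n (j - 1) k i)\<^sup>2))"
    unfolding sum_distrib_left[symmetric]
  proof (rule arg_cong[where f="\<lambda>x. real m * x"])
    have "(\<Sum>i = 1..d. \<Sum>k = 0..m. \<Sum>j = 2..n+1. (bcol A n j k i - bcol A n (j - 1) k i)\<^sup>2)
       = (\<Sum>k = 0..m. \<Sum>i = 1..d. \<Sum>j = 2..n+1. (bcol A n j k i - bcol A n (j - 1) k i)\<^sup>2)"
      by (rule sum.swap)
    also have "\<dots> = (\<Sum>k = 0..m. \<Sum>j = 2..n+1. \<Sum>i = 1..d. (bcol A n j k i - bcol A n (j - 1) k i)\<^sup>2)"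
      by (rule sum.cong[OF refl], rule sum.swap)
    finally show "(\<Sum>i = 1..d. \<Sum>k = 0..m. \<Sum>j = 2..n+1. (bcol A n j k i - bcol A n (j - 1) k i)\<^sup>2)
       = (\<Sum>k = 0..m. \<Sum>j = 2..n+1. \<Sum>i = 1..d. (bcol A n j k i - bcol A n (j - 1) k i)\<^sup>2)" .
  qed
  finally show "(\<Sum>i = 1..d. Max ((\<lambda>j. (A i j)\<^sup>2) ` {1..n}))
              \<le> real m * (\<Sum>k = 0..m. \<Sum>j = 2..n+1.
                    (\<Sum>i = 1..d. (bcol A n j k i - bcol A n (j - 1) k i)\<^sup>2))" .
qed

end
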